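(* Let $\mathcal{G}\subset\mathcal{S}$ with harmonic analogue $\mathcal{G}_H^0$. Then $\mathcal{G}$ is closed under convex combinations if and only if $\mathcal{G}_H^0$ is closed under convex combinations; here a class is closed under convex combinations if for any members $f_1,f_2,\dots$ of it and any $t_n\in[0,1]$ with $\sum_{n\ge1}t_n=1$, the function $\sum_{n\ge1}t_nf_n$ belongs to the class.
   Context: $\mathbb{D}$ is the open unit disk. $\mathcal{S}$ is the class of analytic univalent functions $f$ in $\mathbb{D}$ with $f(0)=0$, $f'(0)=1$. For $\mathcal{G}\subset\mathcal{S}$, its harmonic analogue $\mathcal{G}_H^0$ is the class of harmonic functions $f=h+\bar g$ ($h,g$ analytic in $\mathbb{D}$) such that $h+\epsilon g\in\mathcal{G}$ for every $\epsilon\in\mathbb{C}$ with $|\epsilon|=1$. *)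

theory Defs
  imports "HOL-Analysis.Analysis"
begin

text \<open>Functions are total maps complex => complex; only their values on the unit
disk ball 0 1 matter. A class is a set of such functions.\<close>

definition unit_disk :: "complex set" where
  "unit_disk = ball 0 1"

definition class_S :: "(complex \<Rightarrow> complex) set" where
  "class_S = {f. f analytic_on unit_disk \<and> inj_on f unit_disk \<and> f 0 = 0 \<and> deriv f 0 = 1}"

definition in_class :: "(complex \<Rightarrow> complex) \<Rightarrow> (complex \<Rightarrow> complex) set \<Rightarrow> bool" where
  "in_class f C \<longleftrightarrow> (\<exists>F\<in>C. \<forall>z\<in>unit_disk. F z = f z)"

definition harmonic_analogue :: "(complex \<Rightarrow> complex) set \<Rightarrow> (complex \<Rightarrow> complex) set" where
  "harmonic_analogue G = {f. \<exists>h g. h analytic_on unit_disk \<and> g analytic_on unit_disk \<and>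
      (\<forall>z\<in>unit_disk. f z = h z + cnj (g z)) \<and>
      (\<forall>\<epsilon>::complex. norm \<epsilon> = 1 \<longrightarrow> in_class (\<lambda>z. h z + \<epsilon> * g z) G)}"

definition closed_convex_comb :: "(complex \<Rightarrow> complex) set \<Rightarrow> bool" where
  "closed_convex_comb C \<longleftrightarrow>
     (\<forall>(f :: nat \<Rightarrow> complex \<Rightarrow> complex) (t :: nat \<Rightarrow> real).
        (\<forall>n. f n \<in> C) \<longrightarrow> (\<forall>n. 0 \<le> t n \<and> t n \<le> 1) \<longrightarrow> t sums 1 \<longrightarrow>
        (\<exists>F\<in>C. \<forall>z\<in>unit_disk. (\<lambda>n. complex_of_real (t n) * f n z) sums F z))"

end

theory Submission
  imports Defs "HOL-Complex_Analysis.Complex_Analysis"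
begin

lemma cnj_holo_const:
  assumes "g holomorphic_on B" "(\<lambda>z. cnj (g z)) holomorphic_on B" "open B" "convex B"
  shows "\<exists>c. \<forall>z\<in>B. g z = c"
proof -
  have "(g has_field_derivative 0) (at z within B)" if z: "z \<in> B" for z
  proof -
    have "g field_differentiable at z" using assms z holomorphic_on_imp_differentiable_at by blast
    then obtain a where a: "(g has_field_derivative a) (at z)" using field_differentiable_def by blast
    have "(\<lambda>z. cnj (g z)) field_differentiable at z" using assms z holomorphic_on_imp_differentiable_at by blast
    then obtain b where b: "((\<lambda>z. cnj (g z)) has_field_derivative b) (at z)" using field_differentiable_def by blast
    have d1: "((\<lambda>z. cnj (g z)) has_derivative (\<lambda>h. cnj (a*h))) (at z)"
      using bounded_linear.has_derivative[OF bounded_linear_cnj a[unfolded has_field_derivative_def]] by simp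
    have "(\<lambda>h. cnj (a*h)) = (\<lambda>h. b*h)"
      using has_derivative_unique[OF d1 b[unfolded has_field_derivative_def]] .
    then have e1: "cnj a = b" and e2: "cnj (a*\<i>) = b*\<i>" by (metis mult_1_right)+
    then have "a = 0" by (simp add: complex_eq_iff)
    with a show ?thesis using has_field_derivative_at_within by blast
  qed
  then show ?thesis using has_field_derivative_zero_constant[OF assms(4)] by blast
qed

lemma key:
  fixes f :: "nat \<Rightarrow> complex \<Rightarrow> complex" and t :: "nat \<Rightarrow> real"
  assumes fS: "\<And>n. f n holomorphic_on unit_disk"
    and sm: "\<And>z. z \<in> unit_disk \<Longrightarrow> (\<lambda>n. complex_of_real (t n) * f n z) sums F z"
    and hh: "h holomorphic_on unit_disk"
    and Fe: "\<And>z. z \<in> unit_disk \<Longrightarrow> F z = h z + cnj (g z)"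
  obtains x r where "r > 0" "ball x r \<subseteq> unit_disk" "(\<lambda>z. cnj (g z)) holomorphic_on ball x r"
proof -
  define P where "P N z = (\<Sum>n<N. complex_of_real (t n) * f n z)" for N z
  have Ph: "P N holomorphic_on unit_disk" for N
    unfolding P_def using fS by (intro holomorphic_intros) auto
  have Plim: "(\<lambda>N. P N z) \<longlonglongrightarrow> F z" if "z \<in> unit_disk" for z
    using sm[OF that] unfolding sums_def P_def .
  define E where "E M = (\<Inter>N. unit_disk \<inter> (\<lambda>z. norm (P N z)) -` {..real M})" for M :: nat
  let ?X = "top_of_set unit_disk"
  have od: "open unit_disk" by (simp add: unit_disk_def)
  have cl: "closedin ?X (E M)" for M
  proof -
    have "closedin ?X (unit_disk \<inter> (\<lambda>z. norm (P N z)) -` {..real M})" for N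
      by (intro continuous_closedin_preimage continuous_intros holomorphic_on_imp_continuous_on Ph)
    then show ?thesis unfolding E_def by (intro closedin_Inter) auto
  qed
  have cover: "\<Union> (range E) = unit_disk"
  proof
    show "\<Union> (range E) \<subseteq> unit_disk" by (auto simp: E_def)
    show "unit_disk \<subseteq> \<Union> (range E)"
    proof
      fix z assume z: "z \<in> unit_disk"
      have "Bseq (\<lambda>N. P N z)" using Plim[OF z] convergent_imp_Bseq convergentI by blast
      then obtain K where K: "\<And>N. norm (P N z) \<le> K" by (auto simp: Bseq_def)
      have "\<And>N. norm (P N z) \<le> real (nat \<lceil>K\<rceil>)"
        using K by (meson order.trans real_nat_ceiling_ge)
      then have "z \<in> E (nat \<lceil>K\<rceil>)" using z by (auto simp: E_def)
      then show "z \<in> \<Union> (range E)" by blast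
    qed
  qed
  have cm: "completely_metrizable_space ?X"
    using completely_metrizable_space_openin[OF completely_metrizable_space_euclidean, of unit_disk] od
    by simp
  have "\<exists>M. ?X interior_of E M \<noteq> {}"
  proof (rule ccontr)
    assume "\<nexists>M. ?X interior_of E M \<noteq> {}"
    then have "?X interior_of \<Union> (range E) = {}"
      using Baire_category_alt[of ?X "range E"] cm cl by auto
    moreover have "0 \<in> unit_disk" by (simp add: unit_disk_def)
    ultimately show False using cover
      by (metis empty_iff interior_of_topspace topspace_euclidean_subtopology)
  qed
  then obtain M x where x: "x \<in> ?X interior_of E M" by blast
  have "open (?X interior_of E M)"
    using openin_open_trans[OF openin_interior_of od] .
  then obtain r where r: "r > 0" "ball x r \<subseteq> ?X interior_of E M"
    using x open_contains_ball by blast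
  have rE: "ball x r \<subseteq> E M" using r(2) interior_of_subset[of ?X "E M"] by (rule order.trans)
  have rD: "ball x r \<subseteq> unit_disk" using rE by (auto simp: E_def)
  obtain \<phi> \<rho> where phi: "\<phi> holomorphic_on ball x r" "strict_mono (\<rho> :: nat \<Rightarrow> nat)"
    "\<And>z. z \<in> ball x r \<Longrightarrow> ((\<lambda>n. P (\<rho> n) z) \<longlongrightarrow> \<phi> z) sequentially"
  proof (rule Montel[of "ball x r" "range P" P])
    show "open (ball x r)" by simp
    show "h holomorphic_on ball x r" if "h \<in> range P" for h
      using that Ph rD holomorphic_on_subset by blast
    show "\<exists>B. \<forall>h\<in>range P. \<forall>z\<in>K. norm (h z) \<le> B" if "compact K" "K \<subseteq> ball x r" for K
      using that rE by (intro exI[of _ "real M"]) (auto simp: E_def)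
  qed auto
  have eq: "\<phi> z = F z" if "z \<in> ball x r" for z
  proof -
    have "((\<lambda>N. P N z) \<circ> \<rho>) \<longlonglongrightarrow> F z"
      using LIMSEQ_subseq_LIMSEQ[OF Plim phi(2)] that rD by blast
    then show ?thesis using phi(3)[OF that] LIMSEQ_unique by (auto simp: comp_def)
  qed
  have "(\<lambda>z. \<phi> z - h z) holomorphic_on ball x r"
    using phi(1) hh rD holomorphic_on_subset by (intro holomorphic_intros) auto
  then have "(\<lambda>z. cnj (g z)) holomorphic_on ball x r"
    by (rule holomorphic_transform) (use eq Fe rD in auto)
  then show ?thesis using that r rD by blast
qed


lemma g_zero:
  fixes f :: "nat \<Rightarrow> complex \<Rightarrow> complex" and t :: "nat \<Rightarrow> real"
  assumes fS: "\<And>n. f n holomorphic_on unit_disk"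
    and sm: "\<And>z. z \<in> unit_disk \<Longrightarrow> (\<lambda>n. complex_of_real (t n) * f n z) sums F z"
    and hh: "h holomorphic_on unit_disk" and gh: "g holomorphic_on unit_disk"
    and Fe: "\<And>z. z \<in> unit_disk \<Longrightarrow> F z = h z + cnj (g z)"
    and g0: "g 0 = 0"
    and z: "z \<in> unit_disk"
  shows "g z = 0"
proof -
  obtain x r where r: "r > 0" "ball x r \<subseteq> unit_disk" "(\<lambda>z. cnj (g z)) holomorphic_on ball x r"
    using key[OF fS sm hh Fe] by blast
  obtain c where c: "\<forall>w\<in>ball x r. g w = c"
    using cnj_holo_const[OF holomorphic_on_subset[OF gh r(2)] r(3)] by auto
  have od: "open unit_disk" "connected unit_disk" by (auto simp: unit_disk_def)
  have all: "g w = c" if "w \<in> unit_disk" for w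
    by (rule analytic_continuation_open[of "ball x r" unit_disk g "\<lambda>_. c"])
       (use r c od gh that in auto)
  have "0 \<in> unit_disk" by (simp add: unit_disk_def)
  then have "c = 0" using all g0 by metis
  then show ?thesis using all[OF z] by simp
qed

lemma S_holo: "f \<in> class_S \<Longrightarrow> f holomorphic_on unit_disk"
  unfolding class_S_def using analytic_imp_holomorphic by blast

lemma S_zero: "f \<in> class_S \<Longrightarrow> f 0 = 0"
  by (simp add: class_S_def)

theorem theorem2p12:
  fixes G :: "(complex \<Rightarrow> complex) set"
  assumes "G \<subseteq> class_S"
  shows "closed_convex_comb G \<longleftrightarrow> closed_convex_comb (harmonic_analogue G)"
proof
  have d0: "0 \<in> unit_disk" by (simp add: unit_disk_def)
  assume cG: "closed_convex_comb G"
  show "closed_convex_comb (harmonic_analogue G)"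
    unfolding closed_convex_comb_def
  proof (intro allI impI)
    fix f :: "nat \<Rightarrow> complex \<Rightarrow> complex" and t :: "nat \<Rightarrow> real"
    assume fH: "\<forall>n. f n \<in> harmonic_analogue G" and t01: "\<forall>n. 0 \<le> t n \<and> t n \<le> 1" and ts: "t sums 1"
    have "\<forall>n. \<exists>hg. fst hg analytic_on unit_disk \<and> snd hg analytic_on unit_disk \<and>
      (\<forall>z\<in>unit_disk. f n z = fst hg z + cnj (snd hg z)) \<and>
      (\<forall>\<epsilon>::complex. norm \<epsilon> = 1 \<longrightarrow> in_class (\<lambda>z. fst hg z + \<epsilon> * snd hg z) G)"
      using fH unfolding harmonic_analogue_def by force
    then obtain hg where hg: "\<And>n. fst (hg n) analytic_on unit_disk" "\<And>n. snd (hg n) analytic_on unit_disk"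
      "\<And>n z. z \<in> unit_disk \<Longrightarrow> f n z = fst (hg n) z + cnj (snd (hg n) z)"
      "\<And>n \<epsilon>. norm \<epsilon> = 1 \<Longrightarrow> in_class (\<lambda>z. fst (hg n) z + \<epsilon> * snd (hg n) z) G"
      by metis
    define hh where "hh n = fst (hg n)" for n
    define gg where "gg n = snd (hg n)" for n
    define \<Phi> where "\<Phi> \<epsilon> n = (SOME F. F \<in> G \<and> (\<forall>z\<in>unit_disk. F z = hh n z + \<epsilon> * gg n z))" for \<epsilon> n
    have Phi: "\<Phi> \<epsilon> n \<in> G \<and> (\<forall>z\<in>unit_disk. \<Phi> \<epsilon> n z = hh n z + \<epsilon> * gg n z)" if "norm \<epsilon> = 1" for \<epsilon> n
    proof -
      have "\<exists>F. F \<in> G \<and> (\<forall>z\<in>unit_disk. F z = hh n z + \<epsilon> * gg n z)"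
        using hg(4)[OF that, of n] unfolding in_class_def hh_def gg_def by blast
      then show ?thesis unfolding \<Phi>_def by (rule someI_ex)
    qed
    define C where "C \<epsilon> = (SOME F. F \<in> G \<and> (\<forall>z\<in>unit_disk. (\<lambda>n. complex_of_real (t n) * \<Phi> \<epsilon> n z) sums F z))" for \<epsilon>
    have Cp: "C \<epsilon> \<in> G \<and> (\<forall>z\<in>unit_disk. (\<lambda>n. complex_of_real (t n) * (hh n z + \<epsilon> * gg n z)) sums C \<epsilon> z)"
      if "norm \<epsilon> = 1" for \<epsilon>
    proof -
      have "\<exists>F\<in>G. \<forall>z\<in>unit_disk. (\<lambda>n. complex_of_real (t n) * \<Phi> \<epsilon> n z) sums F z"
        using cG t01 ts Phi[OF that] unfolding closed_convex_comb_def by blast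
      then have "\<exists>F. F \<in> G \<and> (\<forall>z\<in>unit_disk. (\<lambda>n. complex_of_real (t n) * \<Phi> \<epsilon> n z) sums F z)"
        by blast
      then have "C \<epsilon> \<in> G \<and> (\<forall>z\<in>unit_disk. (\<lambda>n. complex_of_real (t n) * \<Phi> \<epsilon> n z) sums C \<epsilon> z)"
        unfolding C_def by (rule someI_ex)
      then show ?thesis using Phi[OF that] by simp
    qed
    define H where "H z = (C 1 z + C (-1) z) / 2" for z
    define Gg where "Gg z = (C 1 z - C (-1) z) / 2" for z
    have C1: "C 1 \<in> class_S" and Cm1: "C (-1) \<in> class_S" using Cp[of 1] Cp[of "-1"] assms by auto
    have Han: "H analytic_on unit_disk" unfolding H_def
      using C1 Cm1 by (intro analytic_intros) (auto simp: class_S_def)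
    have Gan: "Gg analytic_on unit_disk" unfolding Gg_def
      using C1 Cm1 by (intro analytic_intros) (auto simp: class_S_def)
    have hs: "(\<lambda>n. complex_of_real (t n) * hh n z) sums H z"
      and gs: "(\<lambda>n. complex_of_real (t n) * gg n z) sums Gg z" if z: "z \<in> unit_disk" for z
    proof -
      have a: "(\<lambda>n. complex_of_real (t n) * (hh n z + gg n z)) sums C 1 z" using Cp[of 1] z by simp
      have b: "(\<lambda>n. complex_of_real (t n) * (hh n z - gg n z)) sums C (-1) z" using Cp[of "-1"] z by simp
      have s1: "(\<lambda>n. (complex_of_real (t n) * (hh n z + gg n z) + complex_of_real (t n) * (hh n z - gg n z)) / 2) sums H z"
        unfolding H_def by (intro sums_divide sums_add a b)
      have e1: "(\<lambda>n. (complex_of_real (t n) * (hh n z + gg n z) + complex_of_real (t n) * (hh n z - gg n z)) / 2) = (\<lambda>n. complex_of_real (t n) * hh n z)"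
        by (simp add: ring_distribs)
      show "(\<lambda>n. complex_of_real (t n) * hh n z) sums H z"
        using s1 unfolding e1 .
      have s2: "(\<lambda>n. (complex_of_real (t n) * (hh n z + gg n z) - complex_of_real (t n) * (hh n z - gg n z)) / 2) sums Gg z"
        unfolding Gg_def by (intro sums_divide sums_diff a b)
      have e2: "(\<lambda>n. (complex_of_real (t n) * (hh n z + gg n z) - complex_of_real (t n) * (hh n z - gg n z)) / 2) = (\<lambda>n. complex_of_real (t n) * gg n z)"
        by (simp add: ring_distribs)
      show "(\<lambda>n. complex_of_real (t n) * gg n z) sums Gg z"
        using s2 unfolding e2 .
    qed
    define FF where "FF z = H z + cnj (Gg z)" for z
    show "\<exists>F\<in>harmonic_analogue G. \<forall>z\<in>unit_disk. (\<lambda>n. complex_of_real (t n) * f n z) sums F z"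
    proof (intro bexI[of _ FF] ballI)
      fix z assume z: "z \<in> unit_disk"
      have "(\<lambda>n. cnj (complex_of_real (t n) * gg n z)) sums cnj (Gg z)"
        using sums_cnj[THEN iffD2, OF gs[OF z]] by simp
      then have s3: "(\<lambda>n. complex_of_real (t n) * hh n z + cnj (complex_of_real (t n) * gg n z)) sums FF z"
        unfolding FF_def using hs[OF z] by (intro sums_add)
      have e3: "(\<lambda>n. complex_of_real (t n) * hh n z + cnj (complex_of_real (t n) * gg n z)) = (\<lambda>n. complex_of_real (t n) * f n z)"
        using hg(3)[OF z] by (simp add: hh_def gg_def ring_distribs)
      show "(\<lambda>n. complex_of_real (t n) * f n z) sums FF z"
        using s3 unfolding e3 .
    next
      show "FF \<in> harmonic_analogue G"
        unfolding harmonic_analogue_def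
      proof (intro CollectI exI conjI allI impI ballI)
        show "H analytic_on unit_disk" "Gg analytic_on unit_disk" by (fact Han Gan)+
        show "FF z = H z + cnj (Gg z)" for z by (simp add: FF_def)
        fix \<epsilon> :: complex assume e: "norm \<epsilon> = 1"
        show "in_class (\<lambda>z. H z + \<epsilon> * Gg z) G"
          unfolding in_class_def
        proof (intro bexI ballI)
          show "C \<epsilon> \<in> G" using Cp[OF e] by blast
          fix z assume z: "z \<in> unit_disk"
          have s4: "(\<lambda>n. complex_of_real (t n) * hh n z + \<epsilon> * (complex_of_real (t n) * gg n z)) sums (H z + \<epsilon> * Gg z)"
            by (intro sums_add sums_mult hs gs z)
          have e4: "(\<lambda>n. complex_of_real (t n) * hh n z + \<epsilon> * (complex_of_real (t n) * gg n z)) = (\<lambda>n. complex_of_real (t n) * (hh n z + \<epsilon> * gg n z))"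
            by (simp add: ring_distribs mult.left_commute)
          have "(\<lambda>n. complex_of_real (t n) * (hh n z + \<epsilon> * gg n z)) sums (H z + \<epsilon> * Gg z)"
            using s4 unfolding e4 .
          then show "C \<epsilon> z = H z + \<epsilon> * Gg z"
            using Cp[OF e] z sums_unique2 by blast
        qed
      qed
    qed
  qed
next
  have d0: "0 \<in> unit_disk" by (simp add: unit_disk_def)
  assume cH: "closed_convex_comb (harmonic_analogue G)"
  show "closed_convex_comb G"
    unfolding closed_convex_comb_def
  proof (intro allI impI)
    fix f :: "nat \<Rightarrow> complex \<Rightarrow> complex" and t :: "nat \<Rightarrow> real"
    assume fG: "\<forall>n. f n \<in> G" and t01: "\<forall>n. 0 \<le> t n \<and> t n \<le> 1" and ts: "t sums 1"
    have fH: "f n \<in> harmonic_analogue G" for n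
    proof -
      have an: "f n analytic_on unit_disk" using fG assms by (auto simp: class_S_def)
      have ic: "in_class (\<lambda>z. f n z + \<epsilon> * 0) G" for \<epsilon> :: complex
        unfolding in_class_def using fG by (intro bexI[of _ "f n"]) auto
      show ?thesis unfolding harmonic_analogue_def
        by (intro CollectI exI[of _ "f n"] exI[of _ "\<lambda>_. 0::complex"] conjI allI impI ballI an ic) auto
    qed
    have "\<exists>F\<in>harmonic_analogue G. \<forall>z\<in>unit_disk. (\<lambda>n. complex_of_real (t n) * f n z) sums F z"
      using cH[unfolded closed_convex_comb_def, rule_format, of f t] fH t01 ts by blast
    then obtain F where F: "F \<in> harmonic_analogue G"
      "\<And>z. z \<in> unit_disk \<Longrightarrow> (\<lambda>n. complex_of_real (t n) * f n z) sums F z"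
      by blast
    obtain h g where hg: "h analytic_on unit_disk" "g analytic_on unit_disk"
      "\<And>z. z \<in> unit_disk \<Longrightarrow> F z = h z + cnj (g z)"
      "\<And>\<epsilon>::complex. norm \<epsilon> = 1 \<Longrightarrow> in_class (\<lambda>z. h z + \<epsilon> * g z) G"
      using F(1) unfolding harmonic_analogue_def by blast
    obtain A where A: "A \<in> G" "\<And>z. z \<in> unit_disk \<Longrightarrow> A z = h z + g z"
      using hg(4)[of 1] unfolding in_class_def by auto
    obtain B where B: "B \<in> G" "\<And>z. z \<in> unit_disk \<Longrightarrow> B z = h z - g z"
      using hg(4)[of "-1"] unfolding in_class_def by auto
    have "A 0 = 0" "B 0 = 0" using A(1) B(1) assms S_zero by auto
    then have g0: "g 0 = 0" using A(2)[OF d0] B(2)[OF d0] by (simp add: algebra_simps)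
    have gz: "g z = 0" if "z \<in> unit_disk" for z
      by (rule g_zero[OF _ F(2) analytic_imp_holomorphic[OF hg(1)] analytic_imp_holomorphic[OF hg(2)] hg(3) g0 that])
         (use fG assms S_holo in auto)
    show "\<exists>F\<in>G. \<forall>z\<in>unit_disk. (\<lambda>n. complex_of_real (t n) * f n z) sums F z"
    proof (intro bexI[OF _ A(1)] ballI)
      fix z assume z: "z \<in> unit_disk"
      show "(\<lambda>n. complex_of_real (t n) * f n z) sums A z"
        using F(2)[OF z] hg(3)[OF z] A(2)[OF z] gz[OF z] by simp
    qed
  qed
qed

end
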